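(* Let $k$ be a field of characteristic $0$, $n\ge 2$, and let $v$ be a discrete valuation of $K_n=k((X_1,\ldots,X_n))$ over $k$ (in the sense of the context) with value group $\mathbb{Z}$. Put $\alpha_i=v(X_i)$ for $i=1,\ldots,n$. Then, by means of a finite number of monoidal transformations (composed with permutations of the variables), one obtains $n$ elements $Y_1,\ldots,Y_n\in\widehat{K}_n$ (the new variables) such that $\hat v(Y_i)=\alpha=\gcd\{\alpha_1,\ldots,\alpha_n\}$ for all $i=1,\ldots,n$.
   Context: $R_n=k[[X_1,\ldots,X_n]]$ with maximal ideal $M_n=(X_1,\ldots,X_n)$ and quotient field $K_n$. A discrete valuation of $K_n\mid k$ means a rank-one discrete valuation $v$ of $K_n$, trivial on $k$, whose center $\mathfrak m_v\cap R_n$ in $R_n$ is $M_n$ (so $v>0$ on $M_n\setminus\{0\}$, $v\ge 0$ on $R_n$). $\widehat K_n$ denotes the completion of $K_n$ with respect to $v$ and $\hat v$ the extension of $v$ to it. A monoidal transformation is the injective homomorphism $k[[X_1,\ldots,X_n]]\to k[[Y_1,\ldots,Y_n]]$, $X_1\mapsto Y_1$, $X_2\mapsto Y_1Y_2$, $X_i\mapsto Y_i$ ($i\ge 3$), applied when $v(X_2)>v(X_1)$ (up to renumbering of variables); the new variables are identified with the elements $Y_1=X_1$, $Y_2=X_2/X_1$, $Y_i=X_i$ of $\widehat K_n$, and the procedure may be iterated. *)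

theory Defs
  imports Main "HOL-Combinatorics.Permutations"
begin

text \<open>Formal power series in the variables X_0, ..., X_(n-1) over a field k,
  represented by their coefficient functions on exponent vectors
  (exponent vectors are functions nat => nat vanishing outside {..<n}).\<close>

type_synonym 'a mps = "(nat \<Rightarrow> nat) \<Rightarrow> 'a"

definition pser :: "nat \<Rightarrow> ('a::zero) mps set" where
  "pser n = {f. \<forall>e. (\<exists>i\<ge>n. e i \<noteq> 0) \<longrightarrow> f e = 0}"

definition ps_add :: "('a::plus) mps \<Rightarrow> 'a mps \<Rightarrow> 'a mps" where
  "ps_add f g = (\<lambda>e. f e + g e)"

definition ps_mult :: "('a::comm_ring_1) mps \<Rightarrow> 'a mps \<Rightarrow> 'a mps" where
  "ps_mult f g = (\<lambda>e. \<Sum>d\<in>{d. \<forall>i. d i \<le> e i}. f d * g (\<lambda>i. e i - d i))"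

definition ps_const :: "'a::zero \<Rightarrow> 'a mps" where
  "ps_const c = (\<lambda>e. if e = (\<lambda>_. 0) then c else 0)"

definition ps_monom :: "(nat \<Rightarrow> nat) \<Rightarrow> ('a::{zero,one}) mps" where
  "ps_monom d = (\<lambda>e. if e = d then 1 else 0)"

definition ps_X :: "nat \<Rightarrow> ('a::{zero,one}) mps" where
  "ps_X i = ps_monom (\<lambda>j. if j = i then 1 else 0)"

text \<open>A discrete (rank one) valuation of K_n = Frac(R_n) over k, with value group Z
  and center M_n in R_n. It is given by its (unique-determining) restriction v to
  R_n - {0}; its value on a fraction f/g is v f - v g.\<close>
definition disc_val :: "nat \<Rightarrow> (('a::field) mps \<Rightarrow> int) \<Rightarrow> bool" where
  "disc_val n v \<longleftrightarrow>
     (\<forall>f\<in>pser n. \<forall>g\<in>pser n. f \<noteq> (\<lambda>_. 0) \<longrightarrow> g \<noteq> (\<lambda>_. 0) \<longrightarrow>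
         v (ps_mult f g) = v f + v g) \<and>
     (\<forall>f\<in>pser n. \<forall>g\<in>pser n. f \<noteq> (\<lambda>_. 0) \<longrightarrow> g \<noteq> (\<lambda>_. 0) \<longrightarrow> ps_add f g \<noteq> (\<lambda>_. 0) \<longrightarrow>
         v (ps_add f g) \<ge> min (v f) (v g)) \<and>
     (\<forall>c. c \<noteq> 0 \<longrightarrow> v (ps_const c) = 0) \<and>
     (\<forall>f\<in>pser n. f \<noteq> (\<lambda>_. 0) \<longrightarrow> v f \<ge> 0) \<and>
     (\<forall>f\<in>pser n. f \<noteq> (\<lambda>_. 0) \<longrightarrow> f (\<lambda>_. 0) = 0 \<longrightarrow> v f > 0) \<and>
     {v f - v g | f g. f \<in> pser n \<and> g \<in> pser n \<and> f \<noteq> (\<lambda>_. 0) \<and> g \<noteq> (\<lambda>_. 0)} = UNIV"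

text \<open>Every variable produced by monoidal transformations is a Laurent monomial
  X^e = X^(e+) / X^(e-) in the original variables (e :: nat => int). Its value under
  the extension of v to K_n (and to the completion).\<close>
definition lval :: "(('a::field) mps \<Rightarrow> int) \<Rightarrow> (nat \<Rightarrow> int) \<Rightarrow> int" where
  "lval v e = v (ps_monom (\<lambda>i. nat (e i))) - v (ps_monom (\<lambda>i. nat (- e i)))"

text \<open>A system is given by E, where the i-th variable
  (i < n) is the Laurent monomial X^(E i). A monoidal transformation with respect to
  the pair (i, j) (with value of Y_j > value of Y_i) replaces Y_j by Y_j / Y_i.\<close>
inductive_set reachable_vars ::
    "nat \<Rightarrow> (('a::field) mps \<Rightarrow> int) \<Rightarrow> (nat \<Rightarrow> nat \<Rightarrow> int) set"
  for n :: nat and v :: "'a mps \<Rightarrow> int" where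
  init: "(\<lambda>i j. if i = j \<and> i < n then 1 else 0) \<in> reachable_vars n v"
| monoidal: "E \<in> reachable_vars n v \<Longrightarrow> i < n \<Longrightarrow> j < n \<Longrightarrow> i \<noteq> j \<Longrightarrow>
      lval v (E j) > lval v (E i) \<Longrightarrow>
      E(j := (\<lambda>l. E j l - E i l)) \<in> reachable_vars n v"
| permute: "E \<in> reachable_vars n v \<Longrightarrow> \<sigma> permutes {..<n} \<Longrightarrow>
      (E \<circ> \<sigma>) \<in> reachable_vars n v"

end

theory Submission
  imports Defs
begin

lemma monom_mult:
  assumes a: "\<forall>i\<ge>n. a i = 0" and b: "\<forall>i\<ge>n. b i = 0"
  shows "ps_mult (ps_monom a) (ps_monom b) = (ps_monom (\<lambda>i. a i + b i) :: ('a::comm_ring_1) mps)"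
proof
  fix e :: "nat \<Rightarrow> nat"
  let ?S = "{d. \<forall>i. d i \<le> e i}"
  show "ps_mult (ps_monom a) (ps_monom b) e = (ps_monom (\<lambda>i. a i + b i) :: 'a mps) e"
  proof (cases "e = (\<lambda>i. a i + b i)")
    case True
    have fin: "finite ?S"
    proof (rule finite_subset)
      show "?S \<subseteq> {f. \<forall>x. (x \<in> {..<n} \<longrightarrow> f x \<in> {..(\<Sum>i<n. e i)}) \<and> (x \<notin> {..<n} \<longrightarrow> f x = 0)}"
      proof clarify
        fix d x assume d: "\<forall>i. d i \<le> e i"
        show "(x \<in> {..<n} \<longrightarrow> d x \<in> {..(\<Sum>i<n. e i)}) \<and> (x \<notin> {..<n} \<longrightarrow> d x = 0)"
        proof (intro conjI impI)
          assume "x \<in> {..<n}"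
          then have "e x \<le> (\<Sum>i<n. e i)" by (intro member_le_sum) auto
          then show "d x \<in> {..(\<Sum>i<n. e i)}" using d[rule_format, of x] by auto
        next
          assume "x \<notin> {..<n}"
          then show "d x = 0" using d[rule_format, of x] a b True by auto
        qed
      qed
      show "finite {f. \<forall>x. (x \<in> {..<n} \<longrightarrow> f x \<in> {..(\<Sum>i<n. e i)}) \<and> (x \<notin> {..<n} \<longrightarrow> f x = (0::nat))}"
        by (rule finite_set_of_finite_funs) auto
    qed
    have "ps_mult (ps_monom a) (ps_monom b) e = (\<Sum>d\<in>?S. (if d = a then 1 else 0 :: 'a))"
      unfolding ps_mult_def
    proof (rule sum.cong)
      fix d assume "d \<in> ?S"
      show "ps_monom a d * ps_monom b (\<lambda>i. e i - d i) = (if d = a then 1 else (0::'a))"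
        using True by (auto simp: ps_monom_def)
    qed simp
    also have "\<dots> = 1" using fin True by (simp add: sum.delta)
    finally show ?thesis using True by (simp add: ps_monom_def)
  next
    case False
    have "ps_mult (ps_monom a) (ps_monom b) e = (\<Sum>d\<in>?S. (0::'a))"
      unfolding ps_mult_def
    proof (rule sum.cong)
      fix d assume d: "d \<in> ?S"
      have "\<not> (d = a \<and> (\<lambda>i. e i - d i) = b)"
      proof
        assume h: "d = a \<and> (\<lambda>i. e i - d i) = b"
        have "e = (\<lambda>i. a i + b i)"
        proof
          fix i show "e i = a i + b i" using d h by (auto dest: fun_cong[where x=i])
        qed
        then show False using False by simp
      qed
      then show "ps_monom a d * ps_monom b (\<lambda>i. e i - d i) = (0::'a)"
        by (auto simp: ps_monom_def)
    qed simp
    then show ?thesis using False by (simp add: ps_monom_def)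
  qed
qed

lemma monom_pser: "\<forall>i\<ge>n. d i = 0 \<Longrightarrow> ps_monom d \<in> pser n"
  by (auto simp: pser_def ps_monom_def)

lemma monom_nz: "ps_monom d \<noteq> (\<lambda>_. 0::'a::{zero_neq_one})"
  by (auto simp: ps_monom_def dest: fun_cong[where x=d])

lemma v_monom:
  fixes v :: "('a::field) mps \<Rightarrow> int"
  assumes dv: "disc_val n v"
  shows "\<forall>i\<ge>n. d i = 0 \<Longrightarrow> v (ps_monom d) = (\<Sum>i<n. int (d i) * v (ps_X i))"
proof (induction "\<Sum>i<n. d i" arbitrary: d)
  case 0
  then have "d = (\<lambda>_. 0)" by (auto intro!: ext) (metis lessThan_iff not_less)
  then have "ps_monom d = (ps_const 1 :: 'a mps)" by (auto simp: ps_monom_def ps_const_def)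
  then have "v (ps_monom d) = 0" using dv by (simp add: disc_val_def)
  then show ?case using \<open>d = _\<close> by simp
next
  case (Suc k)
  obtain i where i: "i < n" "d i > 0"
    by (metis Suc.hyps(2) gr0I sum_eq_0_iff finite_lessThan lessThan_iff nat.distinct(1))
  define d' where "d' = d(i := d i - 1)"
  have d'0: "\<forall>l\<ge>n. d' l = 0" using Suc.prems i by (auto simp: d'_def)
  have unit0: "\<forall>l\<ge>n. (if l = i then 1 else 0::nat) = 0" using i by auto
  have dd: "d = (\<lambda>l. d' l + (if l = i then 1 else 0))"
    using i by (auto simp: d'_def)
  have "(\<Sum>l<n. d l) = (\<Sum>l<n. d' l) + (\<Sum>l<n. (if l = i then 1 else 0))"
    by (subst dd) (simp add: sum.distrib)
  then have "k = (\<Sum>l<n. d' l)" using Suc.hyps(2) i by simp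
  then have IH: "v (ps_monom d') = (\<Sum>l<n. int (d' l) * v (ps_X l))"
    using Suc.hyps(1) d'0 by blast
  have "ps_monom d = ps_mult (ps_monom d') (ps_X i :: 'a mps)"
    unfolding ps_X_def by (subst monom_mult[OF d'0 unit0]) (simp add: dd[symmetric])
  then have "v (ps_monom d) = v (ps_monom d') + v (ps_X i)"
  proof -
    have m: "\<forall>f\<in>pser n. \<forall>g\<in>pser n. f \<noteq> (\<lambda>_. 0) \<longrightarrow> g \<noteq> (\<lambda>_. 0) \<longrightarrow>
         v (ps_mult f g) = v f + v g" using dv unfolding disc_val_def by blast
    have "v (ps_mult (ps_monom d') (ps_X i :: 'a mps)) = v (ps_monom d') + v (ps_X i)"
      using m[rule_format, OF monom_pser[OF d'0] monom_pser[OF unit0] monom_nz monom_nz]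
      unfolding ps_X_def .
    then show ?thesis using \<open>ps_monom d = _\<close> by simp
  qed
  also have "\<dots> = (\<Sum>l<n. int (d l) * v (ps_X l))"
  proof -
    have "(\<Sum>l<n. int (d l) * v (ps_X l)) = (\<Sum>l<n. int (d' l) * v (ps_X l) + (if l = i then v (ps_X l) else 0))"
      by (rule sum.cong) (use i in \<open>auto simp: d'_def algebra_simps of_nat_diff Suc_le_eq\<close>)
    also have "\<dots> = v (ps_monom d') + v (ps_X i)" using i IH by (simp add: sum.distrib)
    finally show ?thesis by simp
  qed
  finally show ?case .
qed

lemma lval_lin:
  fixes v :: "('a::field) mps \<Rightarrow> int"
  assumes dv: "disc_val n v" and e: "\<forall>l\<ge>n. e l = 0"
  shows "lval v e = (\<Sum>l<n. e l * v (ps_X l))"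
proof -
  have "lval v e = (\<Sum>l<n. int (nat (e l)) * v (ps_X l)) - (\<Sum>l<n. int (nat (- e l)) * v (ps_X l))"
    unfolding lval_def using e by (simp add: v_monom[OF dv])
  also have "\<dots> = (\<Sum>l<n. (int (nat (e l)) - int (nat (- e l))) * v (ps_X l))"
    by (simp add: sum_subtractf left_diff_distrib)
  also have "\<dots> = (\<Sum>l<n. e l * v (ps_X l))"
    by (rule sum.cong) auto
  finally show ?thesis .
qed

lemma reach_supp: "E \<in> reachable_vars n v \<Longrightarrow> \<forall>i l. l \<ge> n \<longrightarrow> E i l = 0"
proof (induction rule: reachable_vars.induct)
  case (permute E \<sigma>)
  then show ?case by auto
qed auto

lemma Gcd_eqI_int:
  assumes "\<And>d::int. (\<forall>x\<in>A. d dvd x) \<longleftrightarrow> (\<forall>x\<in>B. d dvd x)"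
  shows "Gcd A = Gcd B"
proof -
  have "Gcd A dvd Gcd B" using assms by (meson Gcd_dvd Gcd_greatest)
  moreover have "Gcd B dvd Gcd A" using assms by (meson Gcd_dvd Gcd_greatest)
  ultimately show ?thesis by (simp add: zdvd_antisym_nonneg)
qed

lemma main:
  fixes v :: "('a::field) mps \<Rightarrow> int"
  assumes dv: "disc_val n v" and n: "n \<ge> 1"
  shows "E \<in> reachable_vars n v \<Longrightarrow> (\<forall>i<n. lval v (E i) > 0) \<Longrightarrow>
    \<exists>E'\<in>reachable_vars n v. \<forall>i<n. lval v (E' i) = Gcd ((\<lambda>i. lval v (E i)) ` {..<n})"
proof (induction "nat (\<Sum>i<n. lval v (E i))" arbitrary: E rule: less_induct)
  case less
  note E = less.prems(1) and pos = less.prems(2)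
  show ?case
  proof (cases "\<exists>i<n. \<exists>j<n. lval v (E i) < lval v (E j)")
    case False
    have eq: "\<forall>i<n. lval v (E i) = lval v (E 0)"
    proof (intro allI impI)
      fix i assume "i < n"
      then have "\<not> lval v (E i) < lval v (E 0)" "\<not> lval v (E 0) < lval v (E i)"
        using False n \<open>i < n\<close> by (meson less_le_trans zero_less_one)+
      then show "lval v (E i) = lval v (E 0)" by linarith
    qed
    have "(\<lambda>i. lval v (E i)) ` {..<n} = {lval v (E 0)}"
    proof
      show "(\<lambda>i. lval v (E i)) ` {..<n} \<subseteq> {lval v (E 0)}" using eq by blast
      have "lval v (E 0) \<in> (\<lambda>i. lval v (E i)) ` {..<n}" by (rule imageI) (use n in simp)
      then show "{lval v (E 0)} \<subseteq> (\<lambda>i. lval v (E i)) ` {..<n}" by simp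
    qed
    moreover have "lval v (E 0) > 0" using pos n by simp
    ultimately have "Gcd ((\<lambda>i. lval v (E i)) ` {..<n}) = lval v (E 0)"
      by simp
    then have "\<forall>i<n. lval v (E i) = Gcd ((\<lambda>i. lval v (E i)) ` {..<n})" using eq by presburger
    then show ?thesis using E by blast
  next
    case True
    then obtain i j where ij: "i < n" "j < n" "lval v (E i) < lval v (E j)" by blast
    then have "i \<noteq> j" by auto
    define E' where "E' = E(j := (\<lambda>l. E j l - E i l))"
    have E': "E' \<in> reachable_vars n v" unfolding E'_def
      using reachable_vars.monoidal[OF E ij(1,2) \<open>i\<noteq>j\<close> ij(3)] .
    have supp: "\<forall>i l. l \<ge> n \<longrightarrow> E i l = 0" using reach_supp[OF E] .
    have lj: "lval v (E' j) = lval v (E j) - lval v (E i)"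
    proof -
      have s1: "\<forall>l\<ge>n. E j l = 0" "\<forall>l\<ge>n. E i l = 0" "\<forall>l\<ge>n. E j l - E i l = 0"
        using supp by auto
      have "E' j = (\<lambda>l. E j l - E i l)" by (simp add: E'_def)
      then have "lval v (E' j) = (\<Sum>l<n. (E j l - E i l) * v (ps_X l))"
        using lval_lin[OF dv s1(3)] by simp
      also have "\<dots> = (\<Sum>l<n. E j l * v (ps_X l)) - (\<Sum>l<n. E i l * v (ps_X l))"
        by (simp add: left_diff_distrib sum_subtractf)
      also have "\<dots> = lval v (E j) - lval v (E i)"
        using lval_lin[OF dv s1(1)] lval_lin[OF dv s1(2)] by simp
      finally show ?thesis .
    qed
    have lo: "l \<noteq> j \<Longrightarrow> lval v (E' l) = lval v (E l)" for l by (simp add: E'_def)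
    have pos': "\<forall>l<n. lval v (E' l) > 0" 
    proof (intro allI impI)
      fix l assume "l < n"
      then show "lval v (E' l) > 0" using pos lj lo ij by (cases "l = j") auto
    qed
    have "(\<Sum>l<n. lval v (E' l)) = (\<Sum>l<n. lval v (E l)) - lval v (E i)"
    proof -
      have "(\<Sum>l<n. lval v (E' l)) = (\<Sum>l<n. lval v (E l) - (if l = j then lval v (E i) else 0))"
        by (rule sum.cong) (auto simp: lj lo)
      then show ?thesis using ij by (simp add: sum_subtractf)
    qed
    moreover have "(\<Sum>l<n. lval v (E l)) > 0" using pos ij
      by (intro sum_pos) auto
    ultimately have "nat (\<Sum>l<n. lval v (E' l)) < nat (\<Sum>l<n. lval v (E l))"
      using pos ij by auto
    then obtain E'' where E'': "E'' \<in> reachable_vars n v"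
      "\<forall>l<n. lval v (E'' l) = Gcd ((\<lambda>l. lval v (E' l)) ` {..<n})"
      using less.hyps[OF _ E' pos'] by blast
    have "Gcd ((\<lambda>l. lval v (E' l)) ` {..<n}) = Gcd ((\<lambda>l. lval v (E l)) ` {..<n})"
    proof (rule Gcd_eqI_int)
      fix d :: int
      have "(\<forall>l<n. d dvd lval v (E' l)) \<longleftrightarrow> (\<forall>l<n. d dvd lval v (E l))"
      proof
        assume h: "\<forall>l<n. d dvd lval v (E' l)"
        show "\<forall>l<n. d dvd lval v (E l)"
        proof (intro allI impI)
          fix l assume "l < n"
          show "d dvd lval v (E l)"
          proof (cases "l = j")
            case True
            have "d dvd lval v (E' j) + lval v (E' i)" using h ij by simp
            then show ?thesis using True lj lo[of i] \<open>i \<noteq> j\<close> by simp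
          next
            case False then show ?thesis using h[rule_format, OF \<open>l < n\<close>] lo[OF False] by simp
          qed
        qed
      next
        assume h: "\<forall>l<n. d dvd lval v (E l)"
        show "\<forall>l<n. d dvd lval v (E' l)"
        proof (intro allI impI)
          fix l assume "l < n"
          show "d dvd lval v (E' l)"
          proof (cases "l = j")
            case True
            then show ?thesis using lj h ij by simp
          next
            case False then show ?thesis using h[rule_format, OF \<open>l < n\<close>] lo[OF False] by simp
          qed
        qed
      qed
      then show "(\<forall>x\<in>(\<lambda>l. lval v (E' l)) ` {..<n}. d dvd x) \<longleftrightarrow> (\<forall>x\<in>(\<lambda>l. lval v (E l)) ` {..<n}. d dvd x)"
        by auto
    qed
    then show ?thesis using E'' by auto
  qed
qed

theorem lemma2:
  fixes n :: nat and v :: "('a::field_char_0) mps \<Rightarrow> int"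
  assumes "n \<ge> 2"
    and "disc_val n v"
  shows "\<exists>E\<in>reachable_vars n v.
           \<forall>i<n. lval v (E i) = Gcd ((\<lambda>i. v (ps_X i)) ` {..<n})"
proof -
  define E0 where "E0 = (\<lambda>i j. if i = j \<and> i < n then 1 else 0 :: int)"
  have E0: "E0 \<in> reachable_vars n v" unfolding E0_def by (rule reachable_vars.init)
  have l0: "lval v (E0 i) = v (ps_X i)" if "i < n" for i
  proof -
    have "lval v (E0 i) = (\<Sum>l<n. E0 i l * v (ps_X l))"
      by (rule lval_lin[OF assms(2)]) (auto simp: E0_def)
    also have "\<dots> = (\<Sum>l<n. if l = i then v (ps_X l) else 0)"
      by (rule sum.cong) (auto simp: E0_def that)
    also have "\<dots> = v (ps_X i)" using that by (simp add: sum.delta)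
    finally show ?thesis .
  qed
  have pos: "\<forall>i<n. lval v (E0 i) > 0"
  proof (intro allI impI)
    fix i assume i: "i < n"
    have "(ps_X i :: 'a mps) \<in> pser n" unfolding ps_X_def by (rule monom_pser) (use i in auto)
    moreover have "(ps_X i :: 'a mps) \<noteq> (\<lambda>_. 0)" unfolding ps_X_def by (rule monom_nz)
    moreover have "(ps_X i :: 'a mps) (\<lambda>_. 0) = 0"
      by (auto simp: ps_X_def ps_monom_def dest: fun_cong[where x=i])
    ultimately have "v (ps_X i) > 0" using assms(2) unfolding disc_val_def by blast
    then show "lval v (E0 i) > 0" using l0 i by simp
  qed
  have "(\<lambda>i. lval v (E0 i)) ` {..<n} = (\<lambda>i. v (ps_X i)) ` {..<n}"
    using l0 by auto
  then show ?thesis using main[OF assms(2) _ E0 pos] assms(1) by auto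
qed

end
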